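(* Let $n\ge 2$ and let $\mathcal{F}$ be a maximal coclique of $\Gamma_{2n}$. Any two $\mathcal{F}$-red $(n-1)$-spaces meet (have nonempty intersection). Any two $\mathcal{F}$-red $n$-spaces are not in general position, i.e. they do not meet in just a point.
   Context: $\mathrm{PG}(2n,q)$ is the projective space of projective dimension $2n$ over the field of order $q$; an $i$-space is a subspace of projective dimension $i$. An $(n-1,n)$-flag is a pair $(A,B)$ with $A$ an $(n-1)$-space, $B$ an $n$-space and $A\subseteq B$. Two such flags $(A_1,B_1),(A_2,B_2)$ are opposite if $A_1\cap B_2=A_2\cap B_1=\emptyset$. $\Gamma_{2n}$ is the graph whose vertices are the $(n-1,n)$-flags, adjacent when opposite; a maximal coclique is an inclusion-maximal set of pairwise non-opposite flags. An $n$-space or $(n-1)$-space is $\mathcal{F}$-red if it occurs in exactly $\frac{q^{n+1}-1}{q-1}$ flags of $\mathcal{F}$. Two $n$-spaces of $\mathrm{PG}(2n,q)$ are in general position if they span the whole space, equivalently meet in exactly a point. *)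

theory Defs
  imports "HOL-Analysis.Analysis"
begin

text \<open>PG(2n,q) is modelled by the vector space 'a^'d over a finite field 'a
  with CARD('d) = 2n+1; a projective i-space is a vector subspace of dimension i+1.
  The empty projective subspace corresponds to the zero subspace {0}.\<close>

definition proj_space :: "nat \<Rightarrow> ('a::field ^ 'd) set \<Rightarrow> bool" where
  "proj_space i U \<longleftrightarrow> vec.subspace U \<and> vec.dim U = i + 1"

definition flags :: "nat \<Rightarrow> (('a::field ^ 'd) set \<times> ('a ^ 'd) set) set" where
  "flags n = {(A, B). proj_space (n - 1) A \<and> proj_space n B \<and> A \<subseteq> B}"

definition opposite :: "('a::field ^ 'd) set \<times> ('a ^ 'd) set \<Rightarrow> ('a ^ 'd) set \<times> ('a ^ 'd) set \<Rightarrow> bool" where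
  "opposite f g \<longleftrightarrow> fst f \<inter> snd g = {0} \<and> fst g \<inter> snd f = {0}"

definition coclique :: "nat \<Rightarrow> (('a::field ^ 'd) set \<times> ('a ^ 'd) set) set \<Rightarrow> bool" where
  "coclique n F \<longleftrightarrow> F \<subseteq> flags n \<and> (\<forall>f\<in>F. \<forall>g\<in>F. \<not> opposite f g)"

definition maximal_coclique :: "nat \<Rightarrow> (('a::field ^ 'd) set \<times> ('a ^ 'd) set) set \<Rightarrow> bool" where
  "maximal_coclique n F \<longleftrightarrow> coclique n F \<and>
     (\<forall>G. coclique n G \<and> F \<subseteq> G \<longrightarrow> G = F)"

definition red_number :: "nat \<Rightarrow> nat \<Rightarrow> nat" where
  "red_number q n = (q ^ (n + 1) - 1) div (q - 1)"

definition red_nspace :: "nat \<Rightarrow> (('a::{field,finite} ^ 'd) set \<times> ('a ^ 'd) set) set \<Rightarrow> ('a ^ 'd) set \<Rightarrow> bool" where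
  "red_nspace n F B \<longleftrightarrow> proj_space n B \<and>
     card {f \<in> F. snd f = B} = red_number CARD('a) n"

definition red_n1space :: "nat \<Rightarrow> (('a::{field,finite} ^ 'd) set \<times> ('a ^ 'd) set) set \<Rightarrow> ('a ^ 'd) set \<Rightarrow> bool" where
  "red_n1space n F A \<longleftrightarrow> proj_space (n - 1) A \<and>
     card {f \<in> F. fst f = A} = red_number CARD('a) n"

end

theory Submission
  imports Defs
begin


lemma card_field_ge2: "2 \<le> CARD('a::{field,finite})"
proof -
  have "card {0::'a,1} \<le> CARD('a)" by (rule card_mono) simp_all
  moreover have "card {0::'a,1} = 2" by simp
  ultimately show ?thesis by simp
qed

lemma card_span_le:
  fixes S :: "('a::{field,finite}^'d) set"
  assumes "finite S"
  shows "card (vec.span S) \<le> CARD('a) ^ card S"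
proof -
  have "vec.span S = (\<lambda>u. \<Sum>v\<in>S. u v *s v) ` (S \<rightarrow>\<^sub>E UNIV)"
  proof
    show "vec.span S \<subseteq> (\<lambda>u. \<Sum>v\<in>S. u v *s v) ` (S \<rightarrow>\<^sub>E UNIV)"
    proof
      fix x assume "x \<in> vec.span S"
      then obtain u where x: "x = (\<Sum>v\<in>S. u v *s v)" using vec.span_finite[OF assms] by auto
      have "x = (\<Sum>v\<in>S. restrict u S v *s v)" unfolding x by (rule sum.cong) auto
      moreover have "restrict u S \<in> S \<rightarrow>\<^sub>E UNIV" by simp
      ultimately show "x \<in> (\<lambda>u. \<Sum>v\<in>S. u v *s v) ` (S \<rightarrow>\<^sub>E UNIV)" by blast
    qed
  next
    show "(\<lambda>u. \<Sum>v\<in>S. u v *s v) ` (S \<rightarrow>\<^sub>E UNIV) \<subseteq> vec.span S"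
      using vec.span_finite[OF assms] by auto
  qed
  hence "card (vec.span S) \<le> card (S \<rightarrow>\<^sub>E (UNIV::'a set))"
    by (simp add: card_image_le assms finite_PiE)
  also have "\<dots> = CARD('a) ^ card S" by (simp add: card_PiE assms)
  finally show ?thesis .
qed

lemma subspace_eq_span_basis:
  fixes U :: "('a::{field,finite}^'d) set"
  assumes "vec.subspace U"
  obtains Bs where "finite Bs" "Bs \<subseteq> U" "vec.independent Bs" "vec.span Bs = U" "card Bs = vec.dim U"
proof -
  obtain Bs where "Bs \<subseteq> U" "vec.independent Bs" "U \<subseteq> vec.span Bs" "card Bs = vec.dim U"
    using vec.basis_exists by blast
  moreover have "vec.span Bs = U" using calculation(1,3) assms by (rule vec.span_subspace)
  moreover have "finite Bs" by simp
  ultimately show ?thesis using that by blast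
qed

lemma card_subspace_le:
  fixes U :: "('a::{field,finite}^'d) set"
  assumes "vec.subspace U"
  shows "card U \<le> CARD('a) ^ vec.dim U"
proof -
  obtain Bs where "finite Bs" "vec.span Bs = U" "card Bs = vec.dim U"
    using subspace_eq_span_basis[OF assms] by metis
  thus ?thesis using card_span_le[of Bs] by simp
qed

definition lines :: "('a::field^'d) set \<Rightarrow> ('a^'d) set set" where
  "lines C = {L. \<exists>v\<in>C. v \<noteq> 0 \<and> L = vec.span {v}}"

lemma span_single_eq:
  fixes v w :: "'a::field^'d"
  assumes "w \<in> vec.span {v}" "w \<noteq> 0"
  shows "vec.span {w} = vec.span {v}"
proof -
  obtain k where k: "w = k *s v" using assms(1) vec.span_singleton by auto
  have "k \<noteq> 0" using assms(2) k by auto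
  hence "v = inverse k *s w" using k by simp
  hence "v \<in> vec.span {w}" by (simp add: vec.span_base vec.span_scale)
  have "vec.span {w} \<subseteq> vec.span {v}" using assms(1) by (intro vec.span_minimal) (auto simp: vec.subspace_span)
  moreover have "vec.span {v} \<subseteq> vec.span {w}" using \<open>v \<in> vec.span {w}\<close> by (intro vec.span_minimal) (auto simp: vec.subspace_span)
  ultimately show ?thesis by blast
qed

lemma card_line_ge:
  fixes v :: "'a::{field,finite}^'d"
  assumes "v \<noteq> 0"
  shows "CARD('a) - 1 \<le> card (vec.span {v} - {0})"
proof -
  have sub: "(\<lambda>k. k *s v) ` (UNIV - {0}) \<subseteq> vec.span {v} - {0}"
  proof
    fix x assume "x \<in> (\<lambda>k. k *s v) ` (UNIV - {0})"
    then obtain k where k: "k \<noteq> 0" "x = k *s v" by blast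
    have "x \<in> vec.span {v}" unfolding k(2) vec.span_singleton by (rule rangeI)
    moreover have "x \<noteq> 0" using k assms by (simp add: vec.scale_eq_0_iff)
    ultimately show "x \<in> vec.span {v} - {0}" by blast
  qed
  have inj: "inj_on (\<lambda>k. k *s v) (UNIV - {0})"
  proof (rule inj_onI)
    fix k k' assume "k *s v = k' *s v"
    thus "k = k'" using assms vec.scale_cancel_right by blast
  qed
  have "card (UNIV - {0::'a}) = card ((\<lambda>k. k *s v) ` (UNIV - {0}))"
    by (rule card_image[OF inj, symmetric])
  also have "\<dots> \<le> card (vec.span {v} - {0})" by (rule card_mono[OF _ sub]) simp
  finally have "card (UNIV - {0::'a}) \<le> card (vec.span {v} - {0})" .
  moreover have "card (UNIV - {0::'a}) = CARD('a) - 1" by (simp add: card_Diff_singleton)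
  ultimately show ?thesis by simp
qed

lemma card_lines:
  fixes C :: "('a::{field,finite}^'d) set"
  assumes "vec.subspace C"
  shows "card (lines C) * (CARD('a) - 1) \<le> card C - 1"
proof -
  let ?f = "\<lambda>L. L - {0}"
  have disj: "\<forall>L1\<in>lines C. \<forall>L2\<in>lines C. L1 \<noteq> L2 \<longrightarrow> ?f L1 \<inter> ?f L2 = {}"
  proof (intro ballI impI)
    fix L1 L2 assume "L1 \<in> lines C" "L2 \<in> lines C" "L1 \<noteq> L2"
    then obtain v1 v2 where v: "L1 = vec.span {v1}" "L2 = vec.span {v2}"
      unfolding lines_def by auto
    show "?f L1 \<inter> ?f L2 = {}"
    proof (rule ccontr)
      assume "?f L1 \<inter> ?f L2 \<noteq> {}"
      then obtain w where w: "w \<in> L1" "w \<in> L2" "w \<noteq> 0" by auto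
      have "vec.span {w} = L1" using span_single_eq[of w v1] w(1,3) v(1) by simp
      moreover have "vec.span {w} = L2" using span_single_eq[of w v2] w(2,3) v(2) by simp
      ultimately have "L1 = L2" by simp
      thus False using \<open>L1 \<noteq> L2\<close> by simp
    qed
  qed
  have "card (lines C) * (CARD('a) - 1) \<le> (\<Sum>L\<in>lines C. card (?f L))"
  proof -
    have lb: "\<And>L. L \<in> lines C \<Longrightarrow> CARD('a) - 1 \<le> card (L - {0})"
    proof -
      fix L assume "L \<in> lines C"
      then obtain v where v: "v \<noteq> 0" "L = vec.span {v}" unfolding lines_def by blast
      have "CARD('a) - 1 \<le> card (vec.span {v} - {0})" by (rule card_line_ge[OF v(1)])
      thus "CARD('a) - 1 \<le> card (L - {0})" unfolding v(2) .
    qed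
    have "of_nat (card (lines C)) * (CARD('a) - 1) \<le> (\<Sum>L\<in>lines C. card (L - {0}))"
      by (rule sum_bounded_below[of "lines C" "CARD('a) - 1" "\<lambda>L. card (L - {0})", OF lb])
    thus ?thesis unfolding of_nat_id .
  qed
  also have "\<dots> = card (\<Union>L\<in>lines C. ?f L)"
    by (rule card_UN_disjoint[symmetric]) (simp_all add: disj)
  also have "\<dots> \<le> card (C - {0})"
  proof (rule card_mono)
    show "(\<Union>L\<in>lines C. ?f L) \<subseteq> C - {0}"
    proof
      fix x assume "x \<in> (\<Union>L\<in>lines C. ?f L)"
      then obtain L where L: "L \<in> lines C" "x \<in> L" "x \<noteq> 0" by blast
      then obtain v where v: "v \<in> C" "L = vec.span {v}" unfolding lines_def by blast
      have "vec.span {v} \<subseteq> C" using v(1) assms by (intro vec.span_minimal) auto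
      thus "x \<in> C - {0}" using L v by blast
    qed
  qed simp
  also have "\<dots> = card C - 1" using vec.subspace_0[OF assms] by (simp add: card_Diff_singleton)
  finally show ?thesis .
qed


lemma count_I:
  fixes A :: "('a::{field,finite}^'d) set"
  assumes A: "vec.subspace A" "vec.dim A = k" and N: "CARD('d) = N"
  shows "card {B. vec.subspace B \<and> vec.dim B = k + 1 \<and> A \<subseteq> B} * (CARD('a) - 1)
           \<le> CARD('a) ^ (N - k) - 1"
proof -
  obtain As where As: "finite As" "As \<subseteq> A" "vec.independent As" "vec.span As = A" "card As = vec.dim A"
    by (rule subspace_eq_span_basis[OF A(1)])
  obtain Ws where Ws: "As \<subseteq> Ws" "Ws \<subseteq> UNIV" "vec.independent Ws" "UNIV \<subseteq> vec.span Ws"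
    by (rule vec.maximal_independent_subset_extend[OF subset_UNIV As(3)])
  have fW: "finite Ws" by simp
  have spW: "vec.span Ws = UNIV" using Ws(4) by blast
  have "vec.dim (UNIV::('a^'d) set) = card Ws"
    by (rule vec.dim_eq_card) (simp_all add: spW Ws(3))
  hence cW: "card Ws = N" using vec_dim_card[where 'a='a and 'n='d] N by simp
  define C where "C = vec.span (Ws - As)"
  have indC: "vec.independent (Ws - As)" using vec.independent_mono[OF Ws(3) Diff_subset] .
  have kN: "k \<le> N" using card_mono[OF fW Ws(1)] cW As(5) A(2) by simp
  have "card (Ws - As) = N - k" using card_Diff_subset[OF As(1) Ws(1)] cW As(5) A(2) by simp
  hence dC: "vec.dim C = N - k"
    unfolding C_def vec.dim_span_eq_card_independent[OF indC] .
  have sC: "vec.subspace C" unfolding C_def by (rule vec.subspace_span)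
  have "As \<union> (Ws - As) = Ws" using Ws(1) by blast
  hence "UNIV = vec.span (As \<union> (Ws - As))" using spW by simp
  also have "\<dots> = {x + y |x y. x \<in> vec.span As \<and> y \<in> vec.span (Ws - As)}" by (rule vec.span_Un)
  also have "\<dots> = {x + y |x y. x \<in> A \<and> y \<in> C}" unfolding As(4) C_def ..
  finally have sum: "{x + y |x y. x \<in> A \<and> y \<in> C} = UNIV" by simp
  have "vec.dim {x + y |x y. x \<in> A \<and> y \<in> C} + vec.dim (A \<inter> C) = vec.dim A + vec.dim C"
    by (rule vec.dim_sums_Int[OF A(1) sC])
  hence "vec.dim (UNIV::('a^'d) set) + vec.dim (A \<inter> C) = k + (N - k)"
    unfolding sum A(2) dC .
  hence "vec.dim (A \<inter> C) = 0" using vec_dim_card[where 'a='a and 'n='d] N kN by simp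
  hence AC: "A \<inter> C \<subseteq> {0}" by (simp only: vec.dim_eq_0)
  have spA: "vec.span A = A" using A(1) by (simp only: vec.span_eq_iff)
  let ?S = "{B. vec.subspace B \<and> vec.dim B = k + 1 \<and> A \<subseteq> B}"
  have key: "B \<inter> C \<in> lines C \<and> vec.span (A \<union> (B \<inter> C)) = B" if BS0: "B \<in> ?S" for B
  proof -
    from BS0 have B: "vec.subspace B" "vec.dim B = k+1" "A \<subseteq> B" by auto
    have "\<not> B \<subseteq> A"
    proof
      assume "B \<subseteq> A" hence "vec.dim B \<le> vec.dim A" by (rule vec.dim_subset)
      thus False using A(2) B(2) by simp
    qed
    then obtain v where v: "v \<in> B" "v \<notin> A" by blast
    have "v \<in> {x + y |x y. x \<in> A \<and> y \<in> C}" unfolding sum by (rule UNIV_I)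
    then obtain x y where xy: "v = x + y" "x \<in> A" "y \<in> C" by blast
    have yv: "y = v - x" using xy(1) by simp
    have "x \<in> B" using xy(2) B(3) by blast
    hence yB: "y \<in> B" unfolding yv by (rule vec.subspace_diff[OF B(1) v(1)])
    have yA: "y \<notin> A"
    proof
      assume "y \<in> A"
      hence "x + y \<in> A" by (rule vec.subspace_add[OF A(1) xy(2)])
      thus False using v xy(1) by simp
    qed
    have y0: "y \<noteq> 0" using yA vec.subspace_0[OF A(1)] by auto
    have "y \<notin> vec.span A" unfolding spA by (rule yA)
    hence dimI: "vec.dim (insert y A) = k + 1" using vec.dim_insert[of y A] A(2) by simp
    have "insert y A \<subseteq> B" using yB B(3) by simp
    moreover have "vec.dim B \<le> vec.dim (insert y A)" using dimI B(2) by simp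
    ultimately have "vec.span (insert y A) = vec.span B" by (rule vec.dim_eq_span)
    hence BS: "B \<subseteq> vec.span (insert y A)" using vec.span_superset[of B] by simp
    have BC: "B \<inter> C = vec.span {y}"
    proof
      show "vec.span {y} \<subseteq> B \<inter> C"
        by (rule vec.span_minimal) (use yB xy(3) vec.subspace_inter[OF B(1) sC] in auto)
      show "B \<inter> C \<subseteq> vec.span {y}"
      proof
        fix z assume z: "z \<in> B \<inter> C"
        then have "z \<in> vec.span (insert y A)" using BS by blast
        then obtain t where t: "z - t *s y \<in> vec.span A" unfolding vec.span_insert by blast
        hence zA: "z - t *s y \<in> A" using spA by simp
        have "t *s y \<in> C" by (rule vec.subspace_scale[OF sC xy(3)])
        moreover have "z \<in> C" using z by blast
        ultimately have "z - t *s y \<in> C" using vec.subspace_diff[OF sC] by blast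
        hence "z - t *s y = 0" using AC zA by blast
        hence "z = t *s y" by simp
        thus "z \<in> vec.span {y}" unfolding vec.span_singleton by (rule image_eqI) simp
      qed
    qed
    have "B \<inter> C \<in> lines C" unfolding lines_def using xy(3) y0 BC by blast
    moreover have "vec.span (A \<union> (B \<inter> C)) = B"
    proof
      have "A \<union> (B \<inter> C) \<subseteq> B" using B(3) by blast
      thus "vec.span (A \<union> (B \<inter> C)) \<subseteq> B" using B(1) by (rule vec.span_minimal)
      have "insert y A \<subseteq> A \<union> (B \<inter> C)" using yB xy(3) by blast
      hence "vec.span (insert y A) \<subseteq> vec.span (A \<union> (B \<inter> C))" by (rule vec.span_mono)
      thus "B \<subseteq> vec.span (A \<union> (B \<inter> C))" using BS by blast
    qed
    ultimately show ?thesis by (rule conjI)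
  qed
  have inj: "inj_on (\<lambda>B. B \<inter> C) ?S"
  proof (rule inj_onI)
    fix B1 B2 assume b: "B1 \<in> ?S" "B2 \<in> ?S" "B1 \<inter> C = B2 \<inter> C"
    have "B1 = vec.span (A \<union> (B1 \<inter> C))" using key[OF b(1)] by simp
    also have "\<dots> = vec.span (A \<union> (B2 \<inter> C))" using b(3) by simp
    also have "\<dots> = B2" using key[OF b(2)] by simp
    finally show "B1 = B2" .
  qed
  have img: "(\<lambda>B. B \<inter> C) ` ?S \<subseteq> lines C"
  proof
    fix L assume "L \<in> (\<lambda>B. B \<inter> C) ` ?S"
    then obtain B where "B \<in> ?S" "L = B \<inter> C" by blast
    thus "L \<in> lines C" using key by simp
  qed
  have "card ?S \<le> card (lines C)"
    by (rule card_inj_on_le[OF inj img]) simp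
  hence "card ?S * (CARD('a) - 1) \<le> card (lines C) * (CARD('a) - 1)" by simp
  also have "\<dots> \<le> card C - 1" by (rule card_lines[OF sC])
  also have "\<dots> \<le> CARD('a) ^ (N - k) - 1" using card_subspace_le[OF sC] dC by simp
  finally show ?thesis .
qed

lemma count_II:
  fixes B :: "('a::{field,finite}^'d) set"
  assumes B: "vec.subspace B" "vec.dim B = m" "1 \<le> m"
  shows "card {H. vec.subspace H \<and> vec.dim H = m - 1 \<and> H \<subseteq> B} * (CARD('a) - 1)
           \<le> CARD('a) ^ m - 1"
proof -
  obtain Bs where Bs: "finite Bs" "Bs \<subseteq> B" "vec.independent Bs" "vec.span Bs = B" "card Bs = vec.dim B"
    by (rule subspace_eq_span_basis[OF B(1)])
  define R where "R x = vec.representation Bs x" for x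
  define \<kappa> where "\<kappa> u = {x\<in>B. (\<Sum>b\<in>Bs. u b * R x b) = 0}" for u :: "'a^'d \<Rightarrow> 'a"
  define P where "P = Bs \<rightarrow>\<^sub>E (UNIV::'a set)"
  define z where "z = (\<lambda>b\<in>Bs. (0::'a))"
  let ?Hyp = "{H. vec.subspace H \<and> vec.dim H = m - 1 \<and> H \<subseteq> B}"
  define U where "U H = {u \<in> P - {z}. \<kappa> u = H}" for H
  have ex: "\<exists>u. u \<in> U H" if "H \<in> ?Hyp" for H
  proof -
    from that have H: "vec.subspace H" "vec.dim H = m - 1" "H \<subseteq> B" by auto
    obtain Hs where Hs: "finite Hs" "Hs \<subseteq> H" "vec.independent Hs" "vec.span Hs = H" "card Hs = vec.dim H"
      by (rule subspace_eq_span_basis[OF H(1)])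
    have HsB: "Hs \<subseteq> B" using Hs(2) H(3) by blast
    obtain Bs' where Bs': "Hs \<subseteq> Bs'" "Bs' \<subseteq> B" "vec.independent Bs'" "B \<subseteq> vec.span Bs'"
      by (rule vec.maximal_independent_subset_extend[OF HsB Hs(3)])
    have cB': "card Bs' = m" using vec.basis_card_eq_dim[OF Bs'(2,4,3)] B(2) by simp
    have fB': "finite Bs'" by simp
    have "Hs \<noteq> Bs'" using cB' Hs(5) H(2) B(3) by auto
    then obtain w where w: "w \<in> Bs'" "w \<notin> Hs" using Bs'(1) by blast
    have "card Hs = card (Bs' - {w})" using cB' Hs(5) H(2) w(1) by (simp add: card_Diff_singleton)
    hence HsEq: "Hs = Bs' - {w}"
      by (intro card_subset_eq) (use Bs'(1) w in auto)
    define g where "g x = vec.representation Bs' x w" for x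
    have spB': "vec.span Bs' = B" using Bs'(2,4) B(1) by (rule vec.span_subspace)
    have gsum: "g x = (\<Sum>b\<in>Bs. g b * R x b)" if "x \<in> B" for x
    proof -
      have "x = (\<Sum>b\<in>Bs. R x b *s b)"
        using vec.sum_representation_eq[of Bs x Bs] Bs that unfolding R_def by simp
      hence "g x = vec.representation Bs' (\<Sum>b\<in>Bs. R x b *s b) w"
        unfolding g_def by metis
      also have "\<dots> = (\<Sum>b\<in>Bs. vec.representation Bs' (R x b *s b) w)"
      proof -
        have "\<And>b. b \<in> Bs \<Longrightarrow> R x b *s b \<in> vec.span Bs'"
          using spB' Bs(2) vec.subspace_scale[OF B(1)] by blast
        thus ?thesis using vec.representation_sum[of Bs' Bs "\<lambda>b. R x b *s b"] Bs'(3) by simp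
      qed
      also have "\<dots> = (\<Sum>b\<in>Bs. R x b * g b)"
      proof (rule sum.cong)
        fix b assume "b \<in> Bs"
        hence "b \<in> vec.span Bs'" using spB' Bs(2) by blast
        thus "vec.representation Bs' (R x b *s b) w = R x b * g b"
          using vec.representation_scale[OF Bs'(3)] unfolding g_def by simp
      qed simp
      finally show ?thesis by (simp add: mult.commute)
    qed
    define u where "u = (\<lambda>b\<in>Bs. g b)"
    have "\<kappa> u = {x\<in>B. g x = 0}"
    proof -
      have "(\<Sum>b\<in>Bs. u b * R x b) = (\<Sum>b\<in>Bs. g b * R x b)" for x
        unfolding u_def by (rule sum.cong) auto
      thus ?thesis unfolding \<kappa>_def using gsum by auto
    qed
    also have "\<dots> = H"
    proof
      show "H \<subseteq> {x\<in>B. g x = 0}"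
      proof
        fix x assume x: "x \<in> H"
        hence xs: "x \<in> vec.span Hs" using Hs(4) by simp
        have "g x = vec.representation Hs x w"
          unfolding g_def using vec.representation_extend[OF Bs'(3) xs Bs'(1)] by simp
        also have "\<dots> = 0" using vec.representation_ne_zero w(2) by blast
        finally show "x \<in> {x\<in>B. g x = 0}" using x H(3) by auto
      qed
      show "{x\<in>B. g x = 0} \<subseteq> H"
      proof
        fix x assume x: "x \<in> {x\<in>B. g x = 0}"
        hence xs: "x \<in> vec.span Bs'" using spB' by simp
        have "x = (\<Sum>b\<in>Bs'. vec.representation Bs' x b *s b)"
          using vec.sum_representation_eq[of Bs' x Bs'] Bs'(3) xs fB' by simp
        also have "\<dots> = g x *s w + (\<Sum>b\<in>Bs' - {w}. vec.representation Bs' x b *s b)"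
          using w(1) fB' unfolding g_def by (simp add: sum.remove)
        also have "\<dots> = (\<Sum>b\<in>Hs. vec.representation Bs' x b *s b)" using x HsEq by simp
        also have "\<dots> \<in> vec.span Hs"
          by (intro vec.span_sum vec.span_scale vec.span_base) auto
        finally show "x \<in> H" using Hs(4) by simp
      qed
    qed
    finally have ku: "\<kappa> u = H" .
    have uP: "u \<in> P" unfolding u_def P_def by simp
    have "u \<noteq> z"
    proof
      assume "u = z"
      hence "\<forall>b\<in>Bs. g b = 0" unfolding u_def z_def by (metis restrict_apply')
      hence "g w = 0" using gsum[of w] w(1) Bs'(2) by auto
      moreover have "g w = 1" unfolding g_def using vec.representation_basis[OF Bs'(3) w(1)] by simp
      ultimately show False by simp
    qed
    thus ?thesis using ku uP unfolding U_def by blast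
  qed
  have fP: "finite P" unfolding P_def using Bs(1) by (simp add: finite_PiE)
  have big: "CARD('a) - 1 \<le> card (U H)" if hH: "H \<in> ?Hyp" for H
  proof -
    obtain u0 where u0: "u0 \<in> U H" using ex[OF hH] by blast
    hence u0P: "u0 \<in> P" "u0 \<noteq> z" "\<kappa> u0 = H" by (auto simp: U_def)
    have "\<exists>b\<in>Bs. u0 b \<noteq> 0"
    proof (rule ccontr)
      assume "\<not> (\<exists>b\<in>Bs. u0 b \<noteq> 0)"
      hence "u0 = z" using u0P(1) unfolding P_def z_def
        by (auto simp: PiE_def extensional_def fun_eq_iff)
      thus False using u0P(2) by simp
    qed
    then obtain b0 where b0: "b0 \<in> Bs" "u0 b0 \<noteq> 0" by blast
    define sc where "sc c = (\<lambda>b\<in>Bs. c * u0 b)" for c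
    have "sc ` (UNIV - {0}) \<subseteq> U H"
    proof
      fix v assume "v \<in> sc ` (UNIV - {0})"
      then obtain c where c: "c \<noteq> 0" "v = sc c" by blast
      have "v \<in> P" unfolding c(2) sc_def P_def by simp
      moreover have "v \<noteq> z"
      proof
        assume "v = z" hence "v b0 = z b0" by simp
        thus False using b0 c unfolding sc_def z_def by simp
      qed
      moreover have "\<kappa> v = \<kappa> u0"
      proof -
        have "(\<Sum>b\<in>Bs. v b * R x b) = c * (\<Sum>b\<in>Bs. u0 b * R x b)" for x
          unfolding c(2) sc_def sum_distrib_left by (rule sum.cong) (auto simp: mult.assoc)
        thus ?thesis unfolding \<kappa>_def using c(1) by simp
      qed
      ultimately show "v \<in> U H" using u0P unfolding U_def by simp
    qed
    moreover have "inj_on sc (UNIV - {0})"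
    proof (rule inj_onI)
      fix c c' assume "sc c = sc c'"
      hence "sc c b0 = sc c' b0" by simp
      thus "c = c'" using b0 unfolding sc_def by simp
    qed
    moreover have "finite (U H)" using fP unfolding U_def by simp
    ultimately have "card (UNIV - {0::'a}) \<le> card (U H)"
      by (metis card_image card_mono)
    moreover have "card (UNIV - {0::'a}) = CARD('a) - 1" by (simp add: card_Diff_singleton)
    ultimately show ?thesis by simp
  qed
  have disj: "\<forall>H1\<in>?Hyp. \<forall>H2\<in>?Hyp. H1 \<noteq> H2 \<longrightarrow> U H1 \<inter> U H2 = {}"
    unfolding U_def by blast
  have "card ?Hyp * (CARD('a) - 1) \<le> (\<Sum>H\<in>?Hyp. card (U H))"
    using sum_bounded_below[of ?Hyp "CARD('a) - 1" "\<lambda>H. card (U H)"] big by simp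
  also have "\<dots> = card (\<Union>H\<in>?Hyp. U H)"
    by (rule card_UN_disjoint[symmetric]) (simp_all add: disj)
  also have "\<dots> \<le> card (P - {z})"
    by (rule card_mono) (auto simp: U_def fP)
  also have "\<dots> = CARD('a) ^ m - 1"
  proof -
    have "z \<in> P" unfolding z_def P_def by simp
    hence "card (P - {z}) = card P - 1" by (simp add: card_Diff_singleton)
    also have "card P = CARD('a) ^ m" unfolding P_def using Bs(1,5) B(2) by (simp add: card_PiE)
    finally show ?thesis .
  qed
  finally show ?thesis .
qed


lemma count_to_red:
  fixes S :: "'x set"
  assumes "card S * (CARD('a::{field,finite}) - 1) \<le> CARD('a) ^ (n + 1) - 1"
  shows "card S \<le> red_number CARD('a) n"
proof -
  have "0 < CARD('a) - 1" using card_field_ge2[where 'a='a] by simp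
  thus ?thesis unfolding red_number_def using assms by (simp add: less_eq_div_iff_mult_less_eq)
qed

lemma red_n1_all:
  fixes F :: "(('a::{field,finite}^'d) set \<times> ('a^'d) set) set"
  assumes n: "n \<ge> 2" "CARD('d) = 2*n+1" and F: "F \<subseteq> flags n"
    and red: "red_n1space n F A" and B: "proj_space n B" "A \<subseteq> B"
  shows "(A,B) \<in> F"
proof -
  let ?Sup = "{B. vec.subspace B \<and> vec.dim B = n + 1 \<and> A \<subseteq> B}"
  have A: "vec.subspace A" "vec.dim A = n" using red n(1) unfolding red_n1space_def proj_space_def by auto
  have "card ?Sup * (CARD('a) - 1) \<le> CARD('a) ^ (2*n+1 - n) - 1" by (rule count_I[OF A n(2)])
  hence cS: "card ?Sup \<le> red_number CARD('a) n" by (intro count_to_red) (simp add: Suc_diff_le)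
  let ?SF = "{f\<in>F. fst f = A}"
  let ?SA = "(\<lambda>B. (A,B)) ` ?Sup"
  have sub: "?SF \<subseteq> ?SA"
  proof
    fix f assume f: "f \<in> ?SF"
    obtain A' B' where f': "f = (A', B')" by fastforce
    have "f \<in> flags n" using f F by blast
    thus "f \<in> ?SA" using f f' unfolding flags_def proj_space_def by auto
  qed
  have "card ?SA \<le> card ?Sup" by (rule card_image_le) simp
  hence "card ?SA \<le> card ?SF" using cS red unfolding red_n1space_def by simp
  moreover have "card ?SF \<le> card ?SA" by (rule card_mono[OF _ sub]) simp
  ultimately have "?SF = ?SA" by (intro card_subset_eq[OF _ sub]) simp_all
  moreover have "(A,B) \<in> ?SA" using B unfolding proj_space_def by auto
  ultimately show ?thesis by blast
qed

lemma red_n_all: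
  fixes F :: "(('a::{field,finite}^'d) set \<times> ('a^'d) set) set"
  assumes n: "n \<ge> 2" and F: "F \<subseteq> flags n"
    and red: "red_nspace n F B" and A: "proj_space (n - 1) A" "A \<subseteq> B"
  shows "(A,B) \<in> F"
proof -
  let ?Sub = "{H. vec.subspace H \<and> vec.dim H = (n + 1) - 1 \<and> H \<subseteq> B}"
  have B: "vec.subspace B" "vec.dim B = n + 1" using red unfolding red_nspace_def proj_space_def by auto
  have "card ?Sub * (CARD('a) - 1) \<le> CARD('a) ^ (n+1) - 1" by (rule count_II[OF B]) simp
  hence cS: "card ?Sub \<le> red_number CARD('a) n" by (rule count_to_red)
  let ?SF = "{f\<in>F. snd f = B}"
  let ?SA = "(\<lambda>A. (A,B)) ` ?Sub"
  have sub: "?SF \<subseteq> ?SA"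
  proof
    fix f assume f: "f \<in> ?SF"
    obtain A' B' where f': "f = (A', B')" by fastforce
    have "f \<in> flags n" using f F by blast
    thus "f \<in> ?SA" using f f' n unfolding flags_def proj_space_def by auto
  qed
  have "card ?SA \<le> card ?Sub" by (rule card_image_le) simp
  hence "card ?SA \<le> card ?SF" using cS red unfolding red_nspace_def by simp
  moreover have "card ?SF \<le> card ?SA" by (rule card_mono[OF _ sub]) simp
  ultimately have "?SF = ?SA" by (intro card_subset_eq[OF _ sub]) simp_all
  moreover have "(A,B) \<in> ?SA" using A n unfolding proj_space_def by auto
  ultimately show ?thesis by blast
qed

lemma opp_aux:
  fixes A1 A2 :: "('a::field^'d) set"
  assumes "vec.subspace A1" "vec.subspace A2" "A1 \<inter> A2 \<subseteq> {0}" "v \<notin> vec.span (A1 \<union> A2)"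
  shows "A1 \<inter> vec.span (insert v A2) = {0}"
proof
  show "{0} \<subseteq> A1 \<inter> vec.span (insert v A2)"
    using assms(1) vec.subspace_0 vec.span_zero by auto
  show "A1 \<inter> vec.span (insert v A2) \<subseteq> {0}"
  proof
    fix x assume x: "x \<in> A1 \<inter> vec.span (insert v A2)"
    hence "x \<in> vec.span (insert v A2)" by blast
    hence "\<exists>k. x - k *s v \<in> vec.span A2" unfolding vec.span_insert[of v A2] by (rule CollectD)
    then obtain k where k: "x - k *s v \<in> vec.span A2" by blast
    have spA2: "vec.span A2 = A2" using assms(2) by (simp only: vec.span_eq_iff)
    have kA: "x - k *s v \<in> A2" using k unfolding spA2 .
    have "k = 0"
    proof (rule ccontr)
      assume k0: "k \<noteq> 0"
      have "x \<in> vec.span (A1 \<union> A2)" using x vec.span_base by blast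
      moreover have "x - k *s v \<in> vec.span (A1 \<union> A2)" using kA vec.span_base by blast
      ultimately have "x - (x - k *s v) \<in> vec.span (A1 \<union> A2)" by (rule vec.span_diff)
      hence "k *s v \<in> vec.span (A1 \<union> A2)" by simp
      hence "inverse k *s (k *s v) \<in> vec.span (A1 \<union> A2)" by (rule vec.span_scale)
      thus False using k0 assms(4) by simp
    qed
    thus "x \<in> {0}" using kA x assms(3) by auto
  qed
qed

lemma hyp_avoid:
  fixes B :: "('a::{field,finite}^'d) set"
  assumes "vec.subspace B" "vec.dim B = m" "p \<in> B" "p \<noteq> 0"
  obtains A where "vec.subspace A" "vec.dim A = m - 1" "A \<subseteq> B" "p \<notin> A"
proof -
  have "vec.independent {p}" using assms(4) by simp
  moreover have "{p} \<subseteq> B" using assms(3) by simp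
  ultimately obtain Bs where Bs: "{p} \<subseteq> Bs" "Bs \<subseteq> B" "vec.independent Bs" "B \<subseteq> vec.span Bs"
    using vec.maximal_independent_subset_extend[of "{p}" B] by metis
  have cB: "card Bs = m" using vec.basis_card_eq_dim[OF Bs(2,4,3)] assms(2) by simp
  let ?A = "vec.span (Bs - {p})"
  have ind: "vec.independent (Bs - {p})" using vec.independent_mono[OF Bs(3) Diff_subset] .
  have "vec.dim ?A = card (Bs - {p})" by (rule vec.dim_span_eq_card_independent[OF ind])
  also have "\<dots> = m - 1" using cB Bs(1) by (simp add: card_Diff_singleton)
  finally have "vec.dim ?A = m - 1" .
  moreover have "?A \<subseteq> B" using Bs(2) assms(1) by (intro vec.span_minimal) auto
  moreover have "p \<notin> ?A" using Bs(1,3) unfolding vec.dependent_def by blast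
  ultimately show ?thesis using that vec.subspace_span by blast
qed

theorem mainTheorem5:
  fixes F :: "(('a::{field,finite} ^ 'd) set \<times> ('a ^ 'd) set) set"
    and n :: nat
  assumes "n \<ge> 2"
    and "CARD('d) = 2 * n + 1"
    and "maximal_coclique n F"
  shows "(\<forall>A1 A2. red_n1space n F A1 \<and> red_n1space n F A2 \<longrightarrow> A1 \<inter> A2 \<noteq> {0})
       \<and> (\<forall>B1 B2. red_nspace n F B1 \<and> red_nspace n F B2 \<longrightarrow> vec.dim (B1 \<inter> B2) \<noteq> 1)"
proof -
  have cc: "coclique n F" using assms(3) unfolding maximal_coclique_def by (rule conjunct1)
  have F: "F \<subseteq> flags n" using cc unfolding coclique_def by (rule conjunct1)
  have nopp: "\<And>f g. f \<in> F \<Longrightarrow> g \<in> F \<Longrightarrow> \<not> opposite f g"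
    using cc unfolding coclique_def by blast
  have part1: "A1 \<inter> A2 \<noteq> {0}" if r1: "red_n1space n F A1" and r2: "red_n1space n F A2" for A1 A2
  proof
    assume I: "A1 \<inter> A2 = {0}"
    have A1: "vec.subspace A1" "vec.dim A1 = n" using r1 assms(1) unfolding red_n1space_def proj_space_def by auto
    have A2: "vec.subspace A2" "vec.dim A2 = n" using r2 assms(1) unfolding red_n1space_def proj_space_def by auto
    obtain As1 where As1: "finite As1" "As1 \<subseteq> A1" "vec.independent As1" "vec.span As1 = A1" "card As1 = vec.dim A1"
      by (rule subspace_eq_span_basis[OF A1(1)])
    obtain As2 where As2: "finite As2" "As2 \<subseteq> A2" "vec.independent As2" "vec.span As2 = A2" "card As2 = vec.dim A2"
      by (rule subspace_eq_span_basis[OF A2(1)])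
    have "A1 \<union> A2 \<subseteq> vec.span (As1 \<union> As2)"
      using As1(4) As2(4) vec.span_mono[of As1 "As1 \<union> As2"] vec.span_mono[of As2 "As1 \<union> As2"] by auto
    hence "vec.dim (A1 \<union> A2) \<le> card (As1 \<union> As2)" by (rule vec.dim_le_card) (simp add: As1(1) As2(1))
    also have "\<dots> \<le> 2 * n" using card_Un_le[of As1 As2] As1(5) As2(5) A1(2) A2(2) by simp
    finally have "vec.dim (vec.span (A1 \<union> A2)) < CARD('d)" using assms(2) by simp
    hence "vec.span (A1 \<union> A2) \<noteq> UNIV"
    proof (intro notI)
      assume "vec.dim (vec.span (A1 \<union> A2)) < CARD('d)" "vec.span (A1 \<union> A2) = UNIV"
      thus False using vec_dim_card[where 'a='a and 'n='d] by simp
    qed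
    then obtain v where v: "v \<notin> vec.span (A1 \<union> A2)" by blast
    have v2: "v \<notin> vec.span (A2 \<union> A1)" using v by (simp add: Un_commute)
    define B1 where "B1 = vec.span (insert v A1)"
    define B2 where "B2 = vec.span (insert v A2)"
    have "v \<notin> vec.span A1" using v vec.span_mono[of A1 "A1 \<union> A2"] by auto
    hence "vec.dim B1 = n + 1" unfolding B1_def using vec.dim_insert[of v A1] A1 by simp
    hence pB1: "proj_space n B1" unfolding proj_space_def B1_def by simp
    have "v \<notin> vec.span A2" using v vec.span_mono[of A2 "A1 \<union> A2"] by auto
    hence "vec.dim B2 = n + 1" unfolding B2_def using vec.dim_insert[of v A2] A2 by simp
    hence pB2: "proj_space n B2" unfolding proj_space_def B2_def by simp
    have f1: "(A1, B1) \<in> F"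
      by (rule red_n1_all[OF assms(1,2) F r1 pB1]) (use vec.span_superset[of "insert v A1"] in \<open>auto simp: B1_def\<close>)
    have f2: "(A2, B2) \<in> F"
      by (rule red_n1_all[OF assms(1,2) F r2 pB2]) (use vec.span_superset[of "insert v A2"] in \<open>auto simp: B2_def\<close>)
    have "A1 \<inter> B2 = {0}" unfolding B2_def by (rule opp_aux[OF A1(1) A2(1)]) (use I v in auto)
    moreover have "A2 \<inter> B1 = {0}" unfolding B1_def by (rule opp_aux[OF A2(1) A1(1)]) (use I v2 in auto)
    ultimately have "opposite (A1, B1) (A2, B2)" unfolding opposite_def by simp
    thus False using nopp f1 f2 by blast
  qed
  have part2: "vec.dim (B1 \<inter> B2) \<noteq> 1" if r1: "red_nspace n F B1" and r2: "red_nspace n F B2" for B1 B2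
  proof
    assume d: "vec.dim (B1 \<inter> B2) = 1"
    have B1: "vec.subspace B1" "vec.dim B1 = n + 1" using r1 unfolding red_nspace_def proj_space_def by auto
    have B2: "vec.subspace B2" "vec.dim B2 = n + 1" using r2 unfolding red_nspace_def proj_space_def by auto
    have sI: "vec.subspace (B1 \<inter> B2)" using B1(1) B2(1) by (rule vec.subspace_inter)
    obtain Is where Is: "finite Is" "Is \<subseteq> B1 \<inter> B2" "vec.independent Is" "vec.span Is = B1 \<inter> B2" "card Is = vec.dim (B1 \<inter> B2)"
      by (rule subspace_eq_span_basis[OF sI])
    have "card Is = 1" using Is(5) d by simp
    then obtain p where p: "Is = {p}" by (rule card_1_singletonE)
    have p0: "p \<noteq> 0" using Is(3) p by auto
    have pI: "p \<in> B1 \<inter> B2" using Is(2) p by auto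
    have Ieq: "B1 \<inter> B2 = vec.span {p}" using Is(4) p by simp
    have gen: "A \<inter> B' = {0}"
      if "vec.subspace A" "A \<subseteq> B" "p \<notin> A" "B \<inter> B' = vec.span {p}" for A B B'
    proof
      show "{0} \<subseteq> A \<inter> B'" using that Ieq vec.subspace_0 vec.span_zero by blast
      show "A \<inter> B' \<subseteq> {0}"
      proof
        fix x assume x: "x \<in> A \<inter> B'"
        hence "x \<in> vec.span {p}" using that(2,4) by blast
        then obtain k where k: "x = k *s p" by (auto simp: vec.span_singleton)
        have "k = 0"
        proof (rule ccontr)
          assume "k \<noteq> 0"
          hence "p = inverse k *s x" using k by simp
          hence "p \<in> A" using vec.subspace_scale[OF that(1)] x by auto
          thus False using that(3) by simp
        qed
        thus "x \<in> {0}" using k by simp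
      qed
    qed
    obtain A1 where A1: "vec.subspace A1" "vec.dim A1 = n + 1 - 1" "A1 \<subseteq> B1" "p \<notin> A1"
      using hyp_avoid[OF B1 _ p0] pI by blast
    obtain A2 where A2: "vec.subspace A2" "vec.dim A2 = n + 1 - 1" "A2 \<subseteq> B2" "p \<notin> A2"
      using hyp_avoid[OF B2 _ p0] pI by blast
    have pA1: "proj_space (n - 1) A1" using A1 assms(1) unfolding proj_space_def by simp
    have pA2: "proj_space (n - 1) A2" using A2 assms(1) unfolding proj_space_def by simp
    have f1: "(A1, B1) \<in> F" by (rule red_n_all[OF assms(1) F r1 pA1 A1(3)])
    have f2: "(A2, B2) \<in> F" by (rule red_n_all[OF assms(1) F r2 pA2 A2(3)])
    have "A1 \<inter> B2 = {0}" by (rule gen[OF A1(1) A1(3) A1(4) Ieq])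
    moreover have "A2 \<inter> B1 = {0}" using Ieq by (intro gen[OF A2(1) A2(3) A2(4)]) blast
    ultimately have "opposite (A1, B1) (A2, B2)" unfolding opposite_def by simp
    thus False using nopp f1 f2 by blast
  qed
  show ?thesis
  proof (intro conjI allI impI)
    fix A1 A2 assume "red_n1space n F A1 \<and> red_n1space n F A2"
    thus "A1 \<inter> A2 \<noteq> {0}" by (elim conjE) (rule part1)
  next
    fix B1 B2 assume "red_nspace n F B1 \<and> red_nspace n F B2"
    thus "vec.dim (B1 \<inter> B2) \<noteq> 1" by (elim conjE) (rule part2)
  qed
qed

end
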